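(* Let $\chi_k$ be a sequence of irrigation patterns converging uniformly to an irrigation pattern $\chi$, and let $t_k\in I$ with $t_k\to t$. Then for $\mathbb P$-almost all $p\in\Gamma$, $$m_\chi(\chi(p,t))\ge\limsup_{k\to\infty}m_{\chi_k}(\chi_k(p,t_k)).$$
   Context: A reference space $(\Gamma,\mathcal B(\Gamma),\mathbb P)$ is a complete separable uncountable metric space with a positive finite atomless Borel measure $\mathbb P$. $I=[0,1]$. An irrigation pattern is a measurable $\chi:\Gamma\times I\to\mathbb{R}^n$ with $\chi_p=\chi(p,\cdot)$ absolutely continuous for $\mathbb P$-a.e. $p$. $\chi_k\to\chi$ uniformly means $\chi_k(p,\cdot)\to\chi(p,\cdot)$ uniformly on $I$ for $\mathbb P$-a.e. $p$. $m_\chi(x)=\mathbb P(\{q\in\Gamma:x\in\chi_q(I)\})$. *)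

theory Defs
  imports "HOL-Analysis.Analysis"
begin

definition abs_cont_on :: "real \<Rightarrow> real \<Rightarrow> (real \<Rightarrow> 'b::real_normed_vector) \<Rightarrow> bool" where
  "abs_cont_on a b f \<longleftrightarrow>
     (\<forall>e>0. \<exists>d>0. \<forall>(n::nat) (u::nat \<Rightarrow> real) (v::nat \<Rightarrow> real).
        (\<forall>i<n. a \<le> u i \<and> u i \<le> v i \<and> v i \<le> b) \<and>
        (\<forall>i<n. \<forall>j<n. i \<noteq> j \<longrightarrow> v i \<le> u j \<or> v j \<le> u i) \<and>
        (\<Sum>i<n. v i - u i) < d
        \<longrightarrow> (\<Sum>i<n. norm (f (v i) - f (u i))) < e)"

definition atomless :: "'a measure \<Rightarrow> bool" where
  "atomless M \<longleftrightarrow> (\<forall>A\<in>sets M. emeasure M A > 0 \<longrightarrow>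
      (\<exists>B\<in>sets M. B \<subseteq> A \<and> 0 < emeasure M B \<and> emeasure M B < emeasure M A))"

definition reference_space :: "('a::polish_space) measure \<Rightarrow> bool" where
  "reference_space P \<longleftrightarrow> uncountable (UNIV :: 'a set) \<and> sets P = sets borel \<and>
     finite_measure P \<and> emeasure P (space P) > 0 \<and> atomless P"

definition irrigation_pattern :: "('a::polish_space) measure \<Rightarrow> ('a \<Rightarrow> real \<Rightarrow> 'b::euclidean_space) \<Rightarrow> bool" where
  "irrigation_pattern P X \<longleftrightarrow>
     (\<lambda>z. X (fst z) (snd z)) \<in> borel_measurable (borel \<Otimes>\<^sub>M restrict_space borel {0..1}) \<and>
     (AE p in P. abs_cont_on 0 1 (X p))"

definition pattern_unif_conv :: "('a::polish_space) measure \<Rightarrow> (nat \<Rightarrow> 'a \<Rightarrow> real \<Rightarrow> 'b::euclidean_space) \<Rightarrow> ('a \<Rightarrow> real \<Rightarrow> 'b) \<Rightarrow> bool" where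
  "pattern_unif_conv P Xs X \<longleftrightarrow>
     (AE p in P. uniform_limit {0..1} (\<lambda>k. Xs k p) (X p) sequentially)"

text \<open>Multiplicity m_chi(x) = P({q. x in chi_q(I)}); the set is measured in the completion of P
  (it is the projection of a Borel set, hence universally measurable).\<close>
definition multiplicity_pat :: "('a::polish_space) measure \<Rightarrow> ('a \<Rightarrow> real \<Rightarrow> 'b) \<Rightarrow> 'b \<Rightarrow> real" where
  "multiplicity_pat P X x = measure (completion P) {q \<in> space P. x \<in> X q ` {0..1}}"

end

theory Submission
  imports Defs "HOL-Analysis.Analysis"
begin



lemma abs_cont_imp_cont:
  fixes f :: "real \<Rightarrow> 'b::real_normed_vector"
  assumes "abs_cont_on 0 1 f"
  shows "continuous_on {0..1} f"
proof -
  have "uniformly_continuous_on {0..1} f"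
    unfolding uniformly_continuous_on_def
  proof (intro allI impI)
    fix e :: real assume e: "e > 0"
    then obtain d where d: "d > 0" and H: "\<And>(n::nat) (u::nat \<Rightarrow> real) v.
        (\<forall>i<n. 0 \<le> u i \<and> u i \<le> v i \<and> v i \<le> 1) \<and>
        (\<forall>i<n. \<forall>j<n. i \<noteq> j \<longrightarrow> v i \<le> u j \<or> v j \<le> u i) \<and>
        (\<Sum>i<n. v i - u i) < d
        \<longrightarrow> (\<Sum>i<n. norm (f (v i) - f (u i))) < e"
      using assms unfolding abs_cont_on_def by blast
    show "\<exists>d>0. \<forall>x\<in>{0..1}. \<forall>x'\<in>{0..1}. dist x' x < d \<longrightarrow> dist (f x') (f x) < e"
    proof (intro exI[of _ d] conjI ballI impI d)
      fix x x' :: real assume x: "x \<in> {0..1}" and x': "x' \<in> {0..1}" and dx: "dist x' x < d"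
      have "norm (f (max x x') - f (min x x')) < e"
        using H[of 1 "\<lambda>_. min x x'" "\<lambda>_. max x x'"] x x' dx
        by (auto simp: dist_real_def)
      thus "dist (f x') (f x) < e"
        by (cases "x \<le> x'") (auto simp: dist_norm norm_minus_commute max_def min_def)
    qed
  qed
  thus ?thesis by (rule uniformly_continuous_imp_continuous)
qed

lemma rat_near:
  fixes s :: real
  assumes "s \<in> {0..1}" "d > 0"
  shows "\<exists>r::rat. 0 \<le> real_of_rat r \<and> real_of_rat r \<le> 1 \<and> dist (real_of_rat r) s < d"
proof -
  have "max 0 (s - d) < min 1 (s + d)" using assms by auto
  then obtain q where q: "q \<in> \<rat>" "max 0 (s - d) < q" "q < min 1 (s + d)"
    using Rats_dense_in_real by blast
  then obtain r where "q = real_of_rat r" by (auto simp: Rats_def)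
  thus ?thesis using q by (intro exI[of _ r]) (auto simp: dist_real_def)
qed

lemma image_char:
  fixes f :: "real \<Rightarrow> 'b::real_normed_vector"
  assumes c: "continuous_on {0..1} f"
  shows "(x \<in> f ` {0..1}) \<longleftrightarrow>
     (\<forall>n::nat. \<exists>r::rat. 0 \<le> real_of_rat r \<and> real_of_rat r \<le> 1 \<and> dist (f (real_of_rat r)) x < 1 / Suc n)"
proof
  assume "x \<in> f ` {0..1}"
  then obtain s where s: "s \<in> {0..1}" "x = f s" by auto
  show "\<forall>n::nat. \<exists>r::rat. 0 \<le> real_of_rat r \<and> real_of_rat r \<le> 1 \<and> dist (f (real_of_rat r)) x < 1 / Suc n"
  proof
    fix n :: nat
    have e: "(1::real) / Suc n > 0" by simp
    obtain d where d: "d > 0" "\<And>y. y \<in> {0..1} \<Longrightarrow> dist y s < d \<Longrightarrow> dist (f y) (f s) < 1 / Suc n"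
      using c s(1) e unfolding continuous_on_iff by metis
    obtain r where r: "0 \<le> real_of_rat r" "real_of_rat r \<le> 1" "dist (real_of_rat r) s < d"
      using rat_near[OF s(1) d(1)] by blast
    show "\<exists>r::rat. 0 \<le> real_of_rat r \<and> real_of_rat r \<le> 1 \<and> dist (f (real_of_rat r)) x < 1 / Suc n"
      using r d(2)[of "real_of_rat r"] s(2) by auto
  qed
next
  assume H: "\<forall>n::nat. \<exists>r::rat. 0 \<le> real_of_rat r \<and> real_of_rat r \<le> 1 \<and> dist (f (real_of_rat r)) x < 1 / Suc n"
  have "x \<in> closure (f ` {0..1})"
    unfolding closure_approachable
  proof (intro allI impI)
    fix e :: real assume e: "e > 0"
    obtain n :: nat where n: "1 / Suc n < e"
      using e by (metis nat_approx_posE)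
    obtain r where r: "0 \<le> real_of_rat r" "real_of_rat r \<le> 1" "dist (f (real_of_rat r)) x < 1 / Suc n"
      using H by blast
    thus "\<exists>y\<in>f ` {0..1}. dist y x < e" using n by (intro bexI[of _ "f (real_of_rat r)"]) auto
  qed
  moreover have "closed (f ` {0..1})"
    by (intro compact_imp_closed compact_continuous_image c) auto
  ultimately show "x \<in> f ` {0..1}" by (simp add: closure_closed)
qed




lemma slice_meas:
  fixes P :: "('a::polish_space) measure" and Y :: "'a \<Rightarrow> real \<Rightarrow> 'b::euclidean_space"
  assumes sP: "sets P = sets borel" and Y: "irrigation_pattern P Y" and s: "s \<in> {0..1}"
  shows "(\<lambda>q. Y q s) \<in> borel_measurable P"
proof -
  have j: "(\<lambda>z. Y (fst z) (snd z)) \<in> borel_measurable (borel \<Otimes>\<^sub>M restrict_space borel {0..1})"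
    using Y unfolding irrigation_pattern_def by blast
  have "(\<lambda>q. (q, s)) \<in> borel \<rightarrow>\<^sub>M (borel \<Otimes>\<^sub>M restrict_space (borel::real measure) {0..1})"
    using s by (intro measurable_Pair measurable_ident_sets measurable_const) (auto simp: space_restrict_space)
  from measurable_comp[OF this j] have "(\<lambda>q. Y q s) \<in> borel_measurable borel" by (simp add: o_def)
  thus ?thesis using measurable_cong_sets[OF sP refl] by blast
qed

lemma image_set_completion:
  fixes P :: "('a::polish_space) measure" and Y :: "'a \<Rightarrow> real \<Rightarrow> 'b::euclidean_space"
  assumes sP: "sets P = sets borel" and Y: "irrigation_pattern P Y"
  shows "{q \<in> space P. x \<in> Y q ` {0..1}} \<in> sets (completion P)"
proof -
  define S where "S = {q \<in> space P. \<forall>n::nat. \<exists>r::rat. 0 \<le> real_of_rat r \<and> real_of_rat r \<le> 1 \<and> dist (Y q (real_of_rat r)) x < 1 / Suc n}"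
  have meas: "\<And>r::rat. 0 \<le> real_of_rat r \<and> real_of_rat r \<le> 1 \<Longrightarrow> (\<lambda>q. Y q (real_of_rat r)) \<in> borel_measurable P"
    using slice_meas[OF sP Y] by auto
  have "Measurable.pred P (\<lambda>q. \<forall>n::nat. \<exists>r::rat. 0 \<le> real_of_rat r \<and> real_of_rat r \<le> 1 \<and> dist (Y q (real_of_rat r)) x < 1 / Suc n)"
  proof (intro pred_intros_countable)
    fix n :: nat and r :: rat
    show "Measurable.pred P (\<lambda>q. 0 \<le> real_of_rat r \<and> real_of_rat r \<le> 1 \<and> dist (Y q (real_of_rat r)) x < 1 / Suc n)"
    proof (cases "0 \<le> real_of_rat r \<and> real_of_rat r \<le> 1")
      case True
      note m = meas[OF True]
      show ?thesis using True m by (intro pred_intros_logic pred_const_le pred_const_less borel_measurable_dist measurable_const) auto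
    next
      case False
      have e: "(\<lambda>q. 0 \<le> real_of_rat r \<and> real_of_rat r \<le> 1 \<and> dist (Y q (real_of_rat r)) x < 1 / Suc n) = (\<lambda>q. False)"
        using False by blast
      show ?thesis unfolding e by simp
    qed
  qed
  hence SP: "S \<in> sets P" unfolding S_def by (simp add: pred_def)
  obtain N where N: "N \<in> null_sets P" "{q \<in> space P. \<not> abs_cont_on 0 1 (Y q)} \<subseteq> N"
    using Y unfolding irrigation_pattern_def eventually_ae_filter by auto
  have NP: "N \<subseteq> space P" using N(1) sets.sets_into_space by blast
  have eq: "{q \<in> space P. x \<in> Y q ` {0..1}} = (S - N) \<union> ({q \<in> space P. x \<in> Y q ` {0..1}} \<inter> N)"
  proof -
    have "q \<in> S \<longleftrightarrow> q \<in> {q \<in> space P. x \<in> Y q ` {0..1}}" if "q \<in> space P" "q \<notin> N" for q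
    proof -
      have "abs_cont_on 0 1 (Y q)" using that N(2) by blast
      from image_char[OF abs_cont_imp_cont[OF this], of x] show ?thesis using that unfolding S_def by auto
    qed
    thus ?thesis unfolding S_def by blast
  qed
  show ?thesis
    by (rule sets_completionI[OF eq _ N(1)]) (use SP N(1) in auto)
qed




theorem mainTheorem13:
  fixes P :: "('a::polish_space) measure"
    and Xs :: "nat \<Rightarrow> 'a \<Rightarrow> real \<Rightarrow> 'b::euclidean_space"
    and X :: "'a \<Rightarrow> real \<Rightarrow> 'b"
    and ts :: "nat \<Rightarrow> real" and t :: real
  assumes "reference_space P"
    and "\<And>k. irrigation_pattern P (Xs k)"
    and "irrigation_pattern P X"
    and "pattern_unif_conv P Xs X"
    and "\<And>k. ts k \<in> {0..1}"
    and "ts \<longlonglongrightarrow> t"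
  shows "AE p in P. ereal (multiplicity_pat P X (X p t))
           \<ge> limsup (\<lambda>k. ereal (multiplicity_pat P (Xs k) (Xs k p (ts k))))"
proof -
  note RS = assms(1)[unfolded reference_space_def]
  have sP: "sets P = sets borel" using RS by blast
  have finP: "finite_measure P" using RS by blast
  define M where "M = completion P"
  have finM: "finite_measure M"
  proof (rule finite_measureI)
    show "emeasure M (space M) \<noteq> \<infinity>" unfolding M_def
      using finite_measure.emeasure_finite[OF finP, of "space P"] by simp
  qed
  define I :: "real set" where "I = {0..1}"
  define good where "good q \<longleftrightarrow> continuous_on I (X q) \<and> uniform_limit I (\<lambda>k. Xs k q) (X q) sequentially" for q
  have AEgood: "AE q in P. good q"
  proof -
    have "AE q in P. abs_cont_on 0 1 (X q)" using assms(3) unfolding irrigation_pattern_def by blast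
    moreover have "AE q in P. uniform_limit I (\<lambda>k. Xs k q) (X q) sequentially"
      using assms(4) unfolding pattern_unif_conv_def I_def by blast
    ultimately show ?thesis unfolding good_def I_def by eventually_elim (auto intro: abs_cont_imp_cont)
  qed
  obtain N where N: "N \<in> null_sets P" "{q \<in> space P. \<not> good q} \<subseteq> N"
    using AEgood unfolding eventually_ae_filter by auto
  have NM: "N \<in> sets M" "measure M N = 0" unfolding M_def using N(1)
    by (auto simp: null_sets_def measure_def)
  have tI: "t \<in> I" unfolding I_def
    using assms(5,6) by (intro closed_sequentially[OF closed_atLeastAtMost _ assms(6)]) auto
  show ?thesis
    using AEgood
  proof eventually_elim
    fix p assume gp: "good p"
    define x where "x = X p t"
    define xk where "xk k = Xs k p (ts k)" for k
    define A where "A k = {q \<in> space P. xk k \<in> Xs k q ` {0..1}}" for k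
    define A0 where "A0 = {q \<in> space P. x \<in> X q ` {0..1}}"
    define B where "B n = (\<Union>k\<in>{n..}. A k)" for n
    have AM: "A k \<in> sets M" for k unfolding A_def M_def by (rule image_set_completion[OF sP assms(2)])
    have A0M: "A0 \<in> sets M" unfolding A0_def M_def by (rule image_set_completion[OF sP assms(3)])
    have BM: "B n \<in> sets M" for n unfolding B_def using AM by auto
    have decB: "decseq B" unfolding B_def decseq_def by (auto, meson atLeast_iff order_trans)
    have xk_lim: "xk \<longlonglongrightarrow> x"
    proof -
      have u: "uniform_limit I (\<lambda>k. Xs k p) (X p) sequentially" and c: "continuous_on I (X p)"
        using gp unfolding good_def by auto
      have "(\<lambda>k. X p (ts k)) \<longlonglongrightarrow> X p t"
        by (rule continuous_on_tendsto_compose[OF c assms(6) tI]) (rule always_eventually, use assms(5) in \<open>auto simp: I_def\<close>)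
      moreover have "(\<lambda>k. dist (Xs k p (ts k)) (X p (ts k))) \<longlonglongrightarrow> 0"
      proof (rule tendstoI)
        fix e :: real assume e: "e > 0"
        have "\<forall>\<^sub>F k in sequentially. \<forall>s\<in>I. dist (Xs k p s) (X p s) < e"
          using u e unfolding uniform_limit_iff by blast
        thus "\<forall>\<^sub>F k in sequentially. dist (dist (Xs k p (ts k)) (X p (ts k))) 0 < e"
          by (rule eventually_mono) (use assms(5) in \<open>auto simp: I_def\<close>)
      qed
      hence "(\<lambda>k. Xs k p (ts k) - X p (ts k)) \<longlonglongrightarrow> 0"
        by (simp only: dist_norm tendsto_norm_zero_iff)
      ultimately show ?thesis unfolding xk_def x_def
        by (rule Lim_transform)
    qed
    have sub: "(\<Inter>n. B n) \<subseteq> A0 \<union> N"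
    proof
      fix q assume q: "q \<in> (\<Inter>n. B n)"
      have qP: "q \<in> space P" using q unfolding B_def A_def by auto
      show "q \<in> A0 \<union> N"
      proof (cases "good q")
        case False thus ?thesis using N(2) qP by blast
      next
        case True
        hence c: "continuous_on I (X q)" and u: "uniform_limit I (\<lambda>k. Xs k q) (X q) sequentially"
          unfolding good_def by auto
        have "x \<in> closure (X q ` I)"
          unfolding closure_approachable
        proof (intro allI impI)
          fix e :: real assume e: "e > 0"
          have "e/2 > 0" using e by simp
          have "\<forall>\<^sub>F k in sequentially. dist (xk k) x < e/2"
            using tendstoD[OF xk_lim, of "e/2"] e by simp
          moreover have "\<forall>\<^sub>F k in sequentially. \<forall>s\<in>I. dist (Xs k q s) (X q s) < e/2"
            using u \<open>e/2 > 0\<close> unfolding uniform_limit_iff by blast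
          ultimately have "\<forall>\<^sub>F k in sequentially. dist (xk k) x < e/2 \<and> (\<forall>s\<in>I. dist (Xs k q s) (X q s) < e/2)"
            by eventually_elim blast
          then obtain n0 where n0: "\<And>k. k \<ge> n0 \<Longrightarrow> dist (xk k) x < e/2 \<and> (\<forall>s\<in>I. dist (Xs k q s) (X q s) < e/2)"
            unfolding eventually_sequentially by blast
          from q have "q \<in> B n0" by blast
          then obtain k where k: "k \<ge> n0" "q \<in> A k" unfolding B_def by blast
          then obtain s where s: "s \<in> I" "xk k = Xs k q s" unfolding A_def I_def by auto
          have "dist (X q s) x \<le> dist (X q s) (Xs k q s) + dist (xk k) x"
            using s(2) dist_triangle[of "X q s" x "Xs k q s"] by simp
          also have "\<dots> < e/2 + e/2" using n0[OF k(1)] s(1) by (intro add_strict_mono) (auto simp: dist_commute)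
          finally have "dist (X q s) x < e" by simp
          thus "\<exists>y\<in>X q ` I. dist y x < e" using s(1) by blast
        qed
        moreover have "closed (X q ` I)"
          by (intro compact_imp_closed compact_continuous_image c) (auto simp: I_def)
        ultimately have "x \<in> X q ` I" by (simp add: closure_closed)
        thus ?thesis using qP unfolding A0_def I_def by auto
      qed
    qed
    have lim: "(\<lambda>n. measure M (B n)) \<longlonglongrightarrow> measure M (\<Inter>n. B n)"
      using BM decB finite_measure.emeasure_finite[OF finM] by (intro Lim_measure_decseq) auto
    have le_inter: "measure M (\<Inter>n. B n) \<le> measure M A0"
    proof -
      have "measure M (\<Inter>n. B n) \<le> measure M (A0 \<union> N)"
        using sub A0M NM(1) by (intro finite_measure.finite_measure_mono[OF finM]) auto
      also have "\<dots> \<le> measure M A0 + measure M N"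
        using A0M NM(1) by (intro measure_Un_le) auto
      finally show ?thesis using NM(2) by simp
    qed
    have bound: "limsup (\<lambda>k. ereal (measure M (A k))) \<le> ereal (measure M (B n))" for n
    proof -
      have "limsup (\<lambda>k. ereal (measure M (A k))) \<le> (SUP m\<in>{n..}. ereal (measure M (A m)))"
        unfolding limsup_INF_SUP by (rule INF_lower) simp
      also have "\<dots> \<le> ereal (measure M (B n))"
      proof (rule SUP_least)
        fix m assume "m \<in> {n..}"
        hence "A m \<subseteq> B n" unfolding B_def by blast
        thus "ereal (measure M (A m)) \<le> ereal (measure M (B n))"
          using BM by (simp add: finite_measure.finite_measure_mono[OF finM])
      qed
      finally show ?thesis .
    qed
    have "limsup (\<lambda>k. ereal (measure M (A k))) \<le> ereal (measure M (\<Inter>n. B n))"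
      using lim bound by (intro LIMSEQ_le_const[of "\<lambda>n. ereal (measure M (B n))"]) auto
    also have "\<dots> \<le> ereal (measure M A0)" using le_inter by simp
    finally show "ereal (multiplicity_pat P X (X p t))
           \<ge> limsup (\<lambda>k. ereal (multiplicity_pat P (Xs k) (Xs k p (ts k))))"
      unfolding multiplicity_pat_def M_def A_def A0_def xk_def x_def by simp
  qed
qed


end
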